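(* Let $\Delta$ be a simplicial polytopal fan in $\mathbb{R}^d$ with ray generators $\mathbf{v}_1,\ldots,\mathbf{v}_n$. The set \[ \mathcal{U}=\{U\in\mathbb{R}^{m\times d}\colon|\hat{P}^\Delta(U,\mathbf{y})|=1\text{ for all }\mathbf{y}\in\mathbb{R}^m\}\subseteq\mathbb{R}^{m\times d} \] is semi-algebraic.
   Context: A set is semi-algebraic if it is a finite Boolean combination of sets of the form $\{\mathbf{x}\colon f_i(\mathbf{x})\ge0,\ i=1,\ldots,k\}$ with polynomials $f_i$. A fan is simplicial if every cone is generated by linearly independent vectors; polytopal if it is the normal fan of a polytope. $h_P(\mathbf{u})=\max_{\mathbf{x}\in P}\langle\mathbf{x},\mathbf{u}\rangle$. The deformation cone $\mathcal{P}(\Delta)$ is the set of polytopes whose normal fan is coarsened by $\Delta$, identified via support vectors $\mathbf{h}=(h_P(\mathbf{v}_i))_i$ with a closed polyhedral cone in $\mathbb{R}^n$. For $U\in\mathbb{R}^{m\times d}$ with rows $\mathbf{u}^{(1)},\ldots,\mathbf{u}^{(m)}$ and $\mathbf{y}\in\mathbb{R}^m$, the least-squares estimator $\hat{P}^\Delta(U,\mathbf{y})\subseteq\mathbb{R}^n$ is the set of support vectors of polytopes $P\in\mathcal{P}(\Delta)$ minimizing $\frac1m\sum_i(h_P(\mathbf{u}^{(i)})-y^{(i)})^2$. *)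

theory Defs
  imports "HOL-Analysis.Analysis"
begin

inductive polyfun :: "('a::euclidean_space \<Rightarrow> real) \<Rightarrow> bool" where
  const: "polyfun (\<lambda>x. c)"
| coord: "b \<in> Basis \<Longrightarrow> polyfun (\<lambda>x. x \<bullet> b)"
| add: "polyfun f \<Longrightarrow> polyfun g \<Longrightarrow> polyfun (\<lambda>x. f x + g x)"
| mult: "polyfun f \<Longrightarrow> polyfun g \<Longrightarrow> polyfun (\<lambda>x. f x * g x)"

inductive semialgebraic :: "('a::euclidean_space) set \<Rightarrow> bool" where
  basic: "finite F \<Longrightarrow> (\<forall>f\<in>F. polyfun f) \<Longrightarrow> semialgebraic {x. \<forall>f\<in>F. f x \<ge> 0}"
| compl: "semialgebraic S \<Longrightarrow> semialgebraic (- S)"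
| union: "semialgebraic S \<Longrightarrow> semialgebraic T \<Longrightarrow> semialgebraic (S \<union> T)"

definition support_fn :: "('a::euclidean_space) set \<Rightarrow> 'a \<Rightarrow> real" where
  "support_fn P u = (SUP x\<in>P. x \<bullet> u)"

definition normal_cone :: "('a::euclidean_space) set \<Rightarrow> 'a set \<Rightarrow> 'a set" where
  "normal_cone P F = {u. \<forall>x\<in>F. x \<bullet> u = support_fn P u}"

definition normal_fan :: "('a::euclidean_space) set \<Rightarrow> 'a set set" where
  "normal_fan P = {normal_cone P F | F. F face_of P \<and> F \<noteq> {}}"

definition pos_hull :: "('a::euclidean_space) set \<Rightarrow> 'a set" where
  "pos_hull S = {x. \<exists>c. (\<forall>s\<in>S. c s \<ge> 0) \<and> x = (\<Sum>s\<in>S. c s *\<^sub>R s)}"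

definition polytopal_fan :: "('a::euclidean_space) set set \<Rightarrow> bool" where
  "polytopal_fan \<Delta> \<longleftrightarrow> (\<exists>Q. polytope Q \<and> Q \<noteq> {} \<and> \<Delta> = normal_fan Q)"

definition simplicial_fan :: "('a::euclidean_space) set set \<Rightarrow> bool" where
  "simplicial_fan \<Delta> \<longleftrightarrow> (\<forall>\<sigma>\<in>\<Delta>. \<exists>S. finite S \<and> independent S \<and> \<sigma> = pos_hull S)"

definition ray_generators :: "('a::euclidean_space) set set \<Rightarrow> ('n \<Rightarrow> 'a) \<Rightarrow> bool" where
  "ray_generators \<Delta> v \<longleftrightarrow> inj v \<and> (\<forall>i. v i \<noteq> 0) \<and>
     {\<sigma>\<in>\<Delta>. aff_dim \<sigma> = 1} = range (\<lambda>i. pos_hull {v i})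
     \<and> (\<forall>i j. i \<noteq> j \<longrightarrow> pos_hull {v i} \<noteq> pos_hull {v j})"

definition coarsened_by :: "('a::euclidean_space) set set \<Rightarrow> 'a set set \<Rightarrow> bool" where
  "coarsened_by N \<Delta> \<longleftrightarrow> (\<forall>\<sigma>\<in>\<Delta>. \<exists>\<tau>\<in>N. \<sigma> \<subseteq> \<tau>)"

definition deformation_cone :: "('a::euclidean_space) set set \<Rightarrow> 'a set set" where
  "deformation_cone \<Delta> = {P. polytope P \<and> P \<noteq> {} \<and> coarsened_by (normal_fan P) \<Delta>}"

definition support_vector :: "('n::finite \<Rightarrow> 'a::euclidean_space) \<Rightarrow> 'a set \<Rightarrow> real^'n" where
  "support_vector v P = (\<chi> i. support_fn P (v i))"

definition ls_loss :: "real^'d^'m \<Rightarrow> real^'m \<Rightarrow> (real^'d) set \<Rightarrow> real" where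
  "ls_loss U y P = (1 / real CARD('m)) * (\<Sum>i\<in>UNIV. (support_fn P (U $ i) - y $ i)^2)"

definition lse :: "(real^'d) set set \<Rightarrow> ('n::finite \<Rightarrow> real^'d) \<Rightarrow> real^'d^'m \<Rightarrow> real^'m \<Rightarrow> (real^'n) set" where
  "lse \<Delta> v U y = {support_vector v P | P. P \<in> deformation_cone \<Delta> \<and>
      (\<forall>Q\<in>deformation_cone \<Delta>. ls_loss U y P \<le> ls_loss U y Q)}"

end

theory Submission
  imports Defs
begin

lemma polyfun_sum: "finite A \<Longrightarrow> (\<And>a. a \<in> A \<Longrightarrow> polyfun (f a)) \<Longrightarrow> polyfun (\<lambda>x. \<Sum>a\<in>A. f a x)"
proof (induction A rule: finite_induct)
  case empty then show ?case using polyfun.const[of 0] by simp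
next
  case (insert a A) then show ?case by (simp add: polyfun.add)
qed

lemma polyfun_prod: "finite A \<Longrightarrow> (\<And>a. a \<in> A \<Longrightarrow> polyfun (f a)) \<Longrightarrow> polyfun (\<lambda>x. \<Prod>a\<in>A. f a x)"
proof (induction A rule: finite_induct)
  case empty then show ?case using polyfun.const[of 1] by simp
next
  case (insert a A) then show ?case by (simp add: polyfun.mult)
qed

lemma polyfun_cmult: "polyfun f \<Longrightarrow> polyfun (\<lambda>x. c * f x)"
  by (rule polyfun.mult[OF polyfun.const])

lemma polyfun_neg: "polyfun f \<Longrightarrow> polyfun (\<lambda>x. - f x)"
  using polyfun_cmult[of f "-1"] by simp

lemma polyfun_linear:
  fixes g :: "'a::euclidean_space \<Rightarrow> real"
  assumes "linear g" shows "polyfun g"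
proof -
  have rep: "g x = (\<Sum>b\<in>Basis. (x \<bullet> b) * g b)" for x
  proof -
    have "g x = g (\<Sum>b\<in>Basis. (x \<bullet> b) *\<^sub>R b)" by (simp add: euclidean_representation)
    also have "\<dots> = (\<Sum>b\<in>Basis. (x \<bullet> b) * g b)"
      using assms by (simp add: linear_sum linear_scale)
    finally show ?thesis .
  qed
  have eq: "g = (\<lambda>x. \<Sum>b\<in>Basis. (x \<bullet> b) * g b)" using rep by (rule ext)
  have "polyfun (\<lambda>x. \<Sum>b\<in>Basis. (x \<bullet> b) * g b)"
  proof (rule polyfun_sum)
    fix b :: 'a assume "b \<in> Basis"
    then show "polyfun (\<lambda>x. (x \<bullet> b) * g b)" by (rule polyfun.mult[OF polyfun.coord polyfun.const])
  qed simp
  then show ?thesis by (subst eq)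
qed

lemma semialg_UNIV: "semialgebraic (UNIV :: 'a::euclidean_space set)"
  using semialgebraic.basic[of "{}"] by simp

lemma semialg_empty: "semialgebraic ({} :: 'a::euclidean_space set)"
  using semialgebraic.compl[OF semialg_UNIV] by simp

lemma semialg_Int: "semialgebraic S \<Longrightarrow> semialgebraic T \<Longrightarrow> semialgebraic (S \<inter> T)"
proof -
  assume "semialgebraic S" "semialgebraic T"
  then have "semialgebraic (- (- S \<union> - T))" by (intro semialgebraic.intros)
  then show ?thesis by simp
qed

lemma semialg_UN: "finite A \<Longrightarrow> (\<And>a. a \<in> A \<Longrightarrow> semialgebraic (S a)) \<Longrightarrow> semialgebraic (\<Union>a\<in>A. S a)"
proof (induction A rule: finite_induct)
  case empty then show ?case by (simp add: semialg_empty)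
next
  case (insert a A) then show ?case by (simp add: semialgebraic.union)
qed

lemma semialg_INT: "finite A \<Longrightarrow> (\<And>a. a \<in> A \<Longrightarrow> semialgebraic (S a)) \<Longrightarrow> semialgebraic (\<Inter>a\<in>A. S a)"
proof (induction A rule: finite_induct)
  case empty then show ?case by (simp add: semialg_UNIV)
next
  case (insert a A) then show ?case by (simp add: semialg_Int)
qed

lemma semialg_ge: "polyfun f \<Longrightarrow> semialgebraic {x. f x \<ge> 0}"
  using semialgebraic.basic[of "{f}"] by simp

lemma semialg_eq: "polyfun f \<Longrightarrow> semialgebraic {x. f x = 0}"
proof -
  assume f: "polyfun f"
  have "{x. f x = 0} = {x. \<forall>g\<in>{f, \<lambda>x. - f x}. g x \<ge> 0}" by auto
  moreover have "semialgebraic {x. \<forall>g\<in>{f, \<lambda>x. - f x}. g x \<ge> 0}"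
    by (rule semialgebraic.basic) (use f polyfun_neg[OF f] in simp_all)
  ultimately show ?thesis by simp
qed

lemma semialg_neq: "polyfun f \<Longrightarrow> semialgebraic {x. f x \<noteq> 0}"
proof -
  assume "polyfun f"
  then have "semialgebraic (- {x. f x = 0})" by (intro semialgebraic.compl semialg_eq)
  moreover have "- {x. f x = 0} = {x. f x \<noteq> 0}" by auto
  ultimately show ?thesis by simp
qed

lemma polyfun_det:
  fixes M :: "'a::euclidean_space \<Rightarrow> real^'n^'n"
  assumes "\<And>i j. polyfun (\<lambda>x. M x $ i $ j)"
  shows "polyfun (\<lambda>x. det (M x))"
  unfolding det_def
proof (rule polyfun_sum)
  fix p assume "p \<in> {p. p permutes (UNIV :: 'n set)}"
  have "polyfun (\<lambda>x. \<Prod>i\<in>UNIV. M x $ i $ p i)"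
    by (rule polyfun_prod) (simp_all add: assms)
  then show "polyfun (\<lambda>x. of_int (sign p) * (\<Prod>i\<in>UNIV. M x $ i $ p i))"
    by (rule polyfun_cmult)
qed simp

lemma abstractA:
  fixes D :: "'p set" and hv :: "'p \<Rightarrow> real^'n" and a :: "'m::finite \<Rightarrow> real^'n"
    and L :: "real^'m \<Rightarrow> 'p \<Rightarrow> real" and c :: real
  assumes c: "c > 0"
    and L: "\<And>y P. P \<in> D \<Longrightarrow> L y P = c * (\<Sum>i\<in>UNIV. (a i \<bullet> hv P - y$i)^2)"
    and cvx: "convex (hv ` D)" and cl: "closed (hv ` D)" and zero: "0 \<in> hv ` D"
  shows "(\<forall>y. card {hv P | P. P \<in> D \<and> (\<forall>Q\<in>D. L y P \<le> L y Q)} = 1) \<longleftrightarrow>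
         (\<forall>z\<in>span (hv ` D). (\<forall>i. a i \<bullet> z = 0) \<longrightarrow> z = 0)"
proof -
  define H where "H = hv ` D"
  define f :: "real^'n \<Rightarrow> real^'m" where "f z = (\<chi> i. a i \<bullet> z)" for z
  have lf: "linear f" unfolding f_def
    by (rule linearI) (auto simp: vec_eq_iff inner_add_right)
  have fz: "f z = 0 \<longleftrightarrow> (\<forall>i. a i \<bullet> z = 0)" for z
    by (simp add: f_def vec_eq_iff)
  have Ld: "L y P = c * (dist (f (hv P)) y)^2" if "P \<in> D" for y P
  proof -
    have "(dist (f (hv P)) y)^2 = (f (hv P) - y) \<bullet> (f (hv P) - y)"
      by (simp add: dist_norm dot_square_norm)
    also have "\<dots> = (\<Sum>i\<in>UNIV. (a i \<bullet> hv P - y$i)^2)"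
      by (simp add: inner_vec_def f_def power2_eq_square)
    finally show ?thesis using L[OF that] by simp
  qed
  have le: "L y P \<le> L y Q \<longleftrightarrow> dist (f (hv P)) y \<le> dist (f (hv Q)) y" if "P \<in> D" "Q \<in> D" for y P Q
  proof -
    have sq: "A \<le> B \<longleftrightarrow> A^2 \<le> B^2" if "A \<ge> 0" "B \<ge> 0" for A B :: real
      using that by (meson power_mono power2_le_imp_le)
    have "L y P \<le> L y Q \<longleftrightarrow> (dist (f (hv P)) y)^2 \<le> (dist (f (hv Q)) y)^2"
      using Ld[OF that(1)] Ld[OF that(2)] c by (simp add: mult_le_cancel_left_pos)
    also have "\<dots> \<longleftrightarrow> dist (f (hv P)) y \<le> dist (f (hv Q)) y"
      using sq[of "dist (f (hv P)) y" "dist (f (hv Q)) y"] by simp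
    finally show ?thesis .
  qed
  have Sy: "{hv P | P. P \<in> D \<and> (\<forall>Q\<in>D. L y P \<le> L y Q)} = {h\<in>H. \<forall>h'\<in>H. dist (f h) y \<le> dist (f h') y}" for y
    unfolding H_def using le by auto
  have spanH: "affine hull H = span H"
    using zero H_def by (intro affine_hull_span_0) (simp add: hull_inc)
  show ?thesis
    unfolding Sy H_def[symmetric]
  proof
    assume A: "\<forall>y. card {h \<in> H. \<forall>h'\<in>H. dist (f h) y \<le> dist (f h') y} = 1"
    show "\<forall>z\<in>span H. (\<forall>i. a i \<bullet> z = 0) \<longrightarrow> z = 0"
    proof (rule ccontr)
      assume "\<not> ?thesis"
      then obtain z where z: "z \<in> span H" "\<forall>i. a i \<bullet> z = 0" "z \<noteq> 0" by blast
      have "H \<noteq> {}" using zero H_def by auto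
      then have "rel_interior H \<noteq> {}" using cvx H_def by (simp add: rel_interior_eq_empty)
      then obtain h0 where h0: "h0 \<in> rel_interior H" by blast
      then obtain e where e: "e > 0" "cball h0 e \<inter> affine hull H \<subseteq> H" "h0 \<in> H"
        by (auto simp: mem_rel_interior_cball)
      define h1 where "h1 = h0 + (e / norm z) *\<^sub>R z"
      have "h1 \<in> span H" unfolding h1_def
        using z(1) e(3) by (intro span_add span_scale) (auto simp: span_base)
      moreover have "h1 \<in> cball h0 e" using e(1) z(3) by (simp add: h1_def dist_norm)
      ultimately have h1H: "h1 \<in> H" using e(2) spanH by blast
      have "h1 \<noteq> h0" using e(1) z(3) by (simp add: h1_def)
      have fh1: "f h1 = f h0"
        using fz z(2) lf by (simp add: h1_def linear_add linear_scale)
      define y where "y = f h0"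
      have "h0 \<in> {h \<in> H. \<forall>h'\<in>H. dist (f h) y \<le> dist (f h') y}" using e(3) by (simp add: y_def)
      moreover have "h1 \<in> {h \<in> H. \<forall>h'\<in>H. dist (f h) y \<le> dist (f h') y}" using h1H fh1 by (simp add: y_def)
      moreover have "card {h \<in> H. \<forall>h'\<in>H. dist (f h) y \<le> dist (f h') y} = 1" using A by blast
      ultimately show False using \<open>h1 \<noteq> h0\<close>
      proof -
        assume a1: "h0 \<in> {h \<in> H. \<forall>h'\<in>H. dist (f h) y \<le> dist (f h') y}"
          and a2: "h1 \<in> {h \<in> H. \<forall>h'\<in>H. dist (f h) y \<le> dist (f h') y}"
          and a3: "card {h \<in> H. \<forall>h'\<in>H. dist (f h) y \<le> dist (f h') y} = 1"
          and a4: "h1 \<noteq> h0"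
        from a3 obtain x where eq: "{h \<in> H. \<forall>h'\<in>H. dist (f h) y \<le> dist (f h') y} = {x}"
          by (rule card_1_singletonE)
        have "h0 \<in> {x}" using a1 eq by (simp only:)
        moreover have "h1 \<in> {x}" using a2 eq by (simp only:)
        ultimately have "h0 = x" "h1 = x" by simp_all
        with a4 show False by simp
      qed
    qed
  next
    assume B: "\<forall>z\<in>span H. (\<forall>i. a i \<bullet> z = 0) \<longrightarrow> z = 0"
    show "\<forall>y. card {h \<in> H. \<forall>h'\<in>H. dist (f h) y \<le> dist (f h') y} = 1"
    proof
      fix y
      have Hne: "H \<noteq> {}" using zero H_def by auto
      obtain e where e: "e > 0" "\<forall>x\<in>span H. norm (f x) \<ge> e * norm x"
        using injective_imp_isometric[of "span H" f] B fz lf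
        by (auto simp: linear_conv_bounded_linear closed_subspace subspace_span)
      have clK: "closed (f ` H)"
      proof (unfold closed_sequential_limits, intro allI impI, elim conjE)
        fix x l assume xK: "\<forall>n. x n \<in> f ` H" and xl: "x \<longlonglongrightarrow> l"
        have "\<forall>n. \<exists>k. k \<in> H \<and> x n = f k" using xK by blast
        from choice[OF this] obtain h where h0: "\<forall>n. h n \<in> H \<and> x n = f (h n)" by blast
        have h: "\<And>n. h n \<in> H" "\<And>n. x n = f (h n)" using h0 by auto
        have "Cauchy h"
        proof (rule metric_CauchyI)
          fix r :: real assume "r > 0"
          then have "e * r > 0" using e by simp
          then obtain M where M: "\<forall>m\<ge>M. \<forall>n\<ge>M. dist (x m) (x n) < e * r"
            using metric_CauchyD[OF LIMSEQ_imp_Cauchy[OF xl]] by blast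
          show "\<exists>M. \<forall>m\<ge>M. \<forall>n\<ge>M. dist (h m) (h n) < r"
          proof (intro exI allI impI)
            fix m n assume "m \<ge> M" "n \<ge> M"
            then have "dist (x m) (x n) < e * r" using M by blast
            moreover have "h m - h n \<in> span H" using h(1) by (simp add: span_diff span_base)
            then have "e * norm (h m - h n) \<le> norm (f (h m - h n))" using e by blast
            moreover have "f (h m - h n) = x m - x n" using h(2) lf by (simp add: linear_diff)
            ultimately have "e * dist (h m) (h n) < e * r" by (simp add: dist_norm)
            then show "dist (h m) (h n) < r" using e(1) by simp
          qed
        qed
        then obtain g where g: "h \<longlonglongrightarrow> g" using convergent_eq_Cauchy by blast
        have gH: "g \<in> H" using cl H_def h(1) g closed_sequentially by blast
        have "bounded_linear f" using lf by (simp add: linear_conv_bounded_linear)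
        then have "isCont f g" by (rule linear_continuous_at)
        then have "(\<lambda>n. f (h n)) \<longlonglongrightarrow> f g" using g by (rule isCont_tendsto_compose)
        moreover have "(\<lambda>n. f (h n)) = x" using h(2) by auto
        ultimately have "x \<longlonglongrightarrow> f g" by simp
        then have "f g = l" using xl LIMSEQ_unique by blast
        with gH show "l \<in> f ` H" by blast
      qed
      have cvK: "convex (f ` H)" using cvx H_def lf by (simp add: convex_linear_image)
      define p where "p = closest_point (f ` H) y"
      have p: "p \<in> f ` H" "\<forall>k\<in>f ` H. dist y p \<le> dist y k"
        using closest_point_exists[OF clK] Hne p_def by auto
      obtain hs where hs: "hs \<in> H" "p = f hs" using p(1) by blast
      have "{h \<in> H. \<forall>h'\<in>H. dist (f h) y \<le> dist (f h') y} = {hs}"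
      proof (intro equalityI subsetI)
        fix h assume hh: "h \<in> {h \<in> H. \<forall>h'\<in>H. dist (f h) y \<le> dist (f h') y}"
        have fhK: "f h \<in> f ` H" using hh by auto
        have "\<forall>k\<in>f ` H. dist y (f h) \<le> dist y k" using hh by (auto simp: dist_commute)
        then have "f h = p" unfolding p_def by (rule closest_point_unique[OF cvK clK fhK])
        then have "f (h - hs) = 0" using hs lf by (simp add: linear_diff)
        moreover have "h - hs \<in> span H" using hh hs by (simp add: span_diff span_base)
        ultimately show "h \<in> {hs}" using B fz by auto
      next
        fix h assume "h \<in> {hs}"
        then show "h \<in> {h \<in> H. \<forall>h'\<in>H. dist (f h) y \<le> dist (f h') y}"
          using hs p(2) by (auto simp: dist_commute)
      qed
      then show "card {h \<in> H. \<forall>h'\<in>H. dist (f h) y \<le> dist (f h') y} = 1" by simp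
    qed
  qed
qed

lemma bdd_inner: "bounded P \<Longrightarrow> bdd_above ((\<lambda>x. x \<bullet> u) ` P)"
proof -
  assume "bounded P"
  then obtain B where B: "\<forall>x\<in>P. norm x \<le> B" by (auto simp: bounded_iff)
  have "x \<bullet> u \<le> B * norm u" if "x \<in> P" for x
  proof -
    have "x \<bullet> u \<le> norm x * norm u" by (rule norm_cauchy_schwarz)
    also have "\<dots> \<le> B * norm u" using B that by (simp add: mult_right_mono)
    finally show ?thesis .
  qed
  then show ?thesis by (auto simp: bdd_above_def)
qed

lemma sf_upper: "bounded P \<Longrightarrow> y \<in> P \<Longrightarrow> y \<bullet> u \<le> support_fn P u"
  unfolding support_fn_def by (rule cSUP_upper) (auto simp: bdd_inner)

lemma sf_attain: "x \<in> P \<Longrightarrow> (\<forall>y\<in>P. y \<bullet> u \<le> x \<bullet> u) \<Longrightarrow> support_fn P u = x \<bullet> u"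
  unfolding support_fn_def
proof (rule antisym)
  assume "x \<in> P" "\<forall>y\<in>P. y \<bullet> u \<le> x \<bullet> u"
  then show "(SUP y\<in>P. y \<bullet> u) \<le> x \<bullet> u" by (intro cSUP_least) auto
  show "x \<bullet> u \<le> (SUP y\<in>P. y \<bullet> u)"
    using \<open>x \<in> P\<close> \<open>\<forall>y\<in>P. y \<bullet> u \<le> x \<bullet> u\<close> by (intro cSUP_upper) (auto simp: bdd_above_def)
qed

lemma sf_exists:
  fixes P :: "'a::euclidean_space set"
  shows "compact P \<Longrightarrow> P \<noteq> {} \<Longrightarrow> \<exists>x\<in>P. \<forall>y\<in>P. y \<bullet> u \<le> x \<bullet> u"
  by (intro continuous_attains_sup) (auto intro!: continuous_intros)

lemma argmax_face:
  fixes P :: "'a::euclidean_space set"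
  assumes "convex P" "bounded P"
  shows "(P \<inter> {x. u \<bullet> x = support_fn P u}) face_of P"
  using assms by (intro face_of_Int_supporting_hyperplane_le) (auto simp: inner_commute sf_upper)

lemma argmax_nonempty:
  fixes P :: "'a::euclidean_space set"
  assumes "compact P" "P \<noteq> {}"
  shows "P \<inter> {x. u \<bullet> x = support_fn P u} \<noteq> {}"
proof -
  obtain x where "x \<in> P" "\<forall>y\<in>P. y \<bullet> u \<le> x \<bullet> u" using sf_exists[OF assms] by blast
  then have "support_fn P u = x \<bullet> u" by (rule sf_attain)
  then show ?thesis using \<open>x \<in> P\<close> by (auto simp: inner_commute)
qed

lemma char_coarse:
  fixes P :: "'a::euclidean_space set"
  assumes P: "polytope P" and x: "x \<in> P" and t: "\<forall>u\<in>\<tau>. x \<bullet> u = support_fn P u" and ne: "\<tau> \<noteq> {}"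
  shows "\<exists>\<sigma>\<in>normal_fan P. \<tau> \<subseteq> \<sigma>"
proof -
  define F where "F = \<Inter> ((\<lambda>u. P \<inter> {z. u \<bullet> z = support_fn P u}) ` \<tau>)"
  have "F face_of P" unfolding F_def
    using ne P by (intro face_of_Inter) (auto intro!: argmax_face polytope_imp_convex polytope_imp_bounded)
  moreover have "x \<in> F" using x t by (auto simp: F_def inner_commute)
  moreover have "\<tau> \<subseteq> normal_cone P F"
    unfolding normal_cone_def F_def using ne by (auto simp: inner_commute)
  ultimately show ?thesis unfolding normal_fan_def by blast
qed

lemma ph_mem: "finite S \<Longrightarrow> t \<in> S \<Longrightarrow> c \<ge> 0 \<Longrightarrow> c *\<^sub>R t \<in> pos_hull S"
  unfolding pos_hull_def
proof (intro CollectI exI[of _ "\<lambda>s. if s = t then c else 0"] conjI)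
  assume "finite S" "t \<in> S" "c \<ge> 0"
  then show "\<forall>s\<in>S. 0 \<le> (if s = t then c else 0)" by auto
  have "(\<Sum>s\<in>S. (if s = t then c else 0) *\<^sub>R s) = (\<Sum>s\<in>S. if s = t then c *\<^sub>R t else 0)"
    by (intro sum.cong) auto
  also have "\<dots> = c *\<^sub>R t" using \<open>finite S\<close> \<open>t \<in> S\<close> by (simp add: sum.delta')
  finally show "c *\<^sub>R t = (\<Sum>s\<in>S. (if s = t then c else 0) *\<^sub>R s)" by simp
qed

lemma ph_zero: "0 \<in> pos_hull S"
  unfolding pos_hull_def by (auto intro!: exI[of _ "\<lambda>_. 0"])

lemma ph_empty: "pos_hull {} = {0}"
  unfolding pos_hull_def by auto

lemma ph_single: "pos_hull {t} = {c *\<^sub>R t | c. c \<ge> 0}"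
  unfolding pos_hull_def by auto

lemma coords_unique:
  fixes S :: "'a::euclidean_space set"
  assumes "finite S" "independent S" "(\<Sum>s\<in>S. c s *\<^sub>R s) = (\<Sum>s\<in>S. d s *\<^sub>R s)" "t \<in> S"
  shows "c t = d t"
proof (rule ccontr)
  assume ne: "c t \<noteq> d t"
  have "(\<Sum>s\<in>S. (c s - d s) *\<^sub>R s) = 0"
    using assms(3) by (simp add: scaleR_diff_left sum_subtractf)
  then have "dependent S" using ne assms(1,4)
    by (subst real_vector.dependent_finite[OF assms(1)]) (auto intro!: exI[of _ "\<lambda>s. c s - d s"])
  then show False using assms(2) by simp
qed

locale fanctx =
  fixes Q :: "(real^'d) set" and \<Delta> :: "(real^'d) set set" and v :: "'n::finite \<Rightarrow> real^'d"
  assumes Q: "polytope Q" "Q \<noteq> {}" and Delta: "\<Delta> = normal_fan Q"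
    and simpf: "simplicial_fan \<Delta>" and rays: "ray_generators \<Delta> v"
begin

lemma Qconv: "convex Q" using Q by (simp add: polytope_imp_convex)
lemma Qbdd: "bounded Q" using Q by (simp add: polytope_imp_bounded)
lemma Qcpt: "compact Q" using Q by (simp add: polytope_imp_compact)

lemma nc_in: "F face_of Q \<Longrightarrow> F \<noteq> {} \<Longrightarrow> normal_cone Q F \<in> \<Delta>"
  unfolding Delta normal_fan_def by blast

lemma Delta_cases: "\<sigma> \<in> \<Delta> \<Longrightarrow> \<exists>F. F face_of Q \<and> F \<noteq> {} \<and> \<sigma> = normal_cone Q F"
  unfolding Delta normal_fan_def by blast

lemma complete: "\<exists>\<tau>\<in>\<Delta>. u \<in> \<tau>"
proof -
  define F where "F = Q \<inter> {x. u \<bullet> x = support_fn Q u}"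
  have "F face_of Q" unfolding F_def using Qconv Qbdd by (rule argmax_face)
  moreover have "F \<noteq> {}" unfolding F_def using Qcpt Q(2) by (rule argmax_nonempty)
  moreover have "u \<in> normal_cone Q F" by (auto simp: normal_cone_def F_def inner_commute)
  ultimately show ?thesis using nc_in by blast
qed

lemma Delta_finite: "finite \<Delta>"
proof -
  have "\<Delta> \<subseteq> normal_cone Q ` {F. F face_of Q}" unfolding Delta normal_fan_def by blast
  then show ?thesis using finite_polytope_faces[OF Q(1)] finite_surj by blast
qed

lemma Delta_ne: "\<Delta> \<noteq> {}"
  using nc_in[OF face_of_refl[OF Qconv] Q(2)] by blast

lemma simpl: "\<tau> \<in> \<Delta> \<Longrightarrow> \<exists>S. finite S \<and> independent S \<and> \<tau> = pos_hull S"
  using simpf unfolding simplicial_fan_def by blast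

lemma ray_in: "pos_hull {v j} \<in> \<Delta>"
  using rays unfolding ray_generators_def by blast

lemma eps_lemma:
  assumes u: "u \<in> normal_cone Q (Q \<inter> {x. s \<bullet> x = support_fn Q s})"
  shows "\<exists>e>0. s - e *\<^sub>R u \<in> normal_cone Q (Q \<inter> {x. s \<bullet> x = support_fn Q s})"
proof -
  define F' where "F' = Q \<inter> {x. s \<bullet> x = support_fn Q s}"
  obtain V where V0: "finite V \<and> Q = convex hull V" using Q(1) unfolding polytope_def by (rule exE)
  then have V: "finite V" "Q = convex hull V" by simp_all
  define Ms where "Ms = support_fn Q s"
  define Mu where "Mu = support_fn Q u"
  define V' where "V' = {y\<in>V. y \<bullet> s < Ms}"
  define e where "e = (if V' = {} then 1 else Min ((\<lambda>y. (Ms - y \<bullet> s) / (Mu - y \<bullet> u + 1)) ` V'))"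
  have VQ: "y \<in> Q" if "y \<in> V" for y using hull_inc[OF that, of convex] V(2) by simp
  have yu: "y \<bullet> u \<le> Mu" if "y \<in> Q" for y unfolding Mu_def using Qbdd that by (rule sf_upper)
  have ys: "y \<bullet> s \<le> Ms" if "y \<in> Q" for y unfolding Ms_def using Qbdd that by (rule sf_upper)
  have finV': "finite V'" using V(1) by (simp add: V'_def)
  have pos: "(Ms - y \<bullet> s) / (Mu - y \<bullet> u + 1) > 0" if "y \<in> V'" for y
  proof -
    have "y \<in> Q" using that VQ by (auto simp: V'_def)
    then show ?thesis using that yu[of y] by (auto simp: V'_def intro!: divide_pos_pos)
  qed
  have epos: "e > 0"
    unfolding e_def using finV' pos by (auto simp: Min_gr_iff)
  have bound: "y \<bullet> (s - e *\<^sub>R u) \<le> Ms - e * Mu" if "y \<in> V" for y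
  proof (cases "y \<in> V'")
    case True
    then have "V' \<noteq> {}" by auto
    then have "e \<le> (Ms - y \<bullet> s) / (Mu - y \<bullet> u + 1)"
      unfolding e_def using finV' True by auto
    moreover have "Mu - y \<bullet> u + 1 > 0" using yu[OF VQ[OF that]] by simp
    ultimately have "e * (Mu - y \<bullet> u + 1) \<le> Ms - y \<bullet> s" by (simp add: pos_le_divide_eq)
    moreover have "e * (Mu - y \<bullet> u) \<le> e * (Mu - y \<bullet> u + 1)" using epos by simp
    ultimately show ?thesis by (simp add: inner_diff_right algebra_simps)
  next
    case False
    then have "y \<bullet> s = Ms" using ys[OF VQ[OF that]] that by (auto simp: V'_def)
    then have "y \<in> F'" using VQ[OF that] by (auto simp: F'_def Ms_def inner_commute)
    then have "y \<bullet> u = Mu" using u by (auto simp: normal_cone_def F'_def Mu_def)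
    then show ?thesis using \<open>y \<bullet> s = Ms\<close> by (simp add: inner_diff_right)
  qed
  have allQ: "\<forall>y\<in>Q. y \<bullet> (s - e *\<^sub>R u) \<le> Ms - e * Mu"
  proof -
    have "V \<subseteq> {y. (s - e *\<^sub>R u) \<bullet> y \<le> Ms - e * Mu}" using bound by (auto simp: inner_commute)
    then have "convex hull V \<subseteq> {y. (s - e *\<^sub>R u) \<bullet> y \<le> Ms - e * Mu}"
      by (intro hull_minimal convex_halfspace_le)
    then show ?thesis using V(2) by (auto simp: inner_commute)
  qed
  have "s - e *\<^sub>R u \<in> normal_cone Q F'"
    unfolding normal_cone_def
  proof (intro CollectI ballI)
    fix x assume x: "x \<in> F'"
    then have "x \<bullet> s = Ms" "x \<bullet> u = Mu" "x \<in> Q"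
      using u by (auto simp: F'_def Ms_def Mu_def normal_cone_def inner_commute)
    then have xv: "x \<bullet> (s - e *\<^sub>R u) = Ms - e * Mu" by (simp add: inner_diff_right)
    show "x \<bullet> (s - e *\<^sub>R u) = support_fn Q (s - e *\<^sub>R u)"
      using sf_attain[of x Q "s - e *\<^sub>R u"] \<open>x \<in> Q\<close> allQ xv by simp
  qed
  then show ?thesis using epos F'_def by blast
qed

end

context fanctx begin

lemma ray_ident:
  assumes \<sigma>: "\<sigma> \<in> \<Delta>" "\<sigma> = pos_hull S" and S: "finite S" "independent S" and s: "s \<in> S"
  shows "\<exists>j \<gamma>. \<gamma> > 0 \<and> s = \<gamma> *\<^sub>R v j"
proof -
  have s0: "s \<noteq> 0" using S(2) s dependent_zero by blast
  obtain F where F: "F face_of Q" "F \<noteq> {}" "\<sigma> = normal_cone Q F" using Delta_cases[OF \<sigma>(1)] by blast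
  have s\<sigma>: "s \<in> \<sigma>" using ph_mem[OF S(1) s, of 1] \<sigma>(2) by simp
  define F' where "F' = Q \<inter> {x. s \<bullet> x = support_fn Q s}"
  have F'face: "F' face_of Q" unfolding F'_def using Qconv Qbdd by (rule argmax_face)
  have F'ne: "F' \<noteq> {}" unfolding F'_def using Qcpt Q(2) by (rule argmax_nonempty)
  define \<tau> where "\<tau> = normal_cone Q F'"
  have \<tau>D: "\<tau> \<in> \<Delta>" unfolding \<tau>_def using F'face F'ne by (rule nc_in)
  obtain S2 where S2: "finite S2" "independent S2" "\<tau> = pos_hull S2" using simpl[OF \<tau>D] by blast
  have s\<tau>: "s \<in> \<tau>" by (auto simp: \<tau>_def normal_cone_def F'_def inner_commute)
  have FF': "F \<subseteq> F'"
  proof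
    fix x assume "x \<in> F"
    then have "x \<in> Q" "x \<bullet> s = support_fn Q s"
      using F(1) face_of_imp_subset s\<sigma> F(3) by (auto simp: normal_cone_def)
    then show "x \<in> F'" by (simp add: F'_def inner_commute)
  qed
  have \<tau>\<sigma>: "\<tau> \<subseteq> \<sigma>" using FF' by (auto simp: \<tau>_def F(3) normal_cone_def)
  obtain c where c: "\<forall>t\<in>S2. c t \<ge> 0" "s = (\<Sum>t\<in>S2. c t *\<^sub>R t)"
    using s\<tau> S2(3) unfolding pos_hull_def by blast
  have cpos: "c t > 0" if t: "t \<in> S2" for t
  proof -
    have "t \<in> \<tau>" using ph_mem[OF S2(1) t, of 1] S2(3) by simp
    then obtain e where e: "e > 0" "s - e *\<^sub>R t \<in> \<tau>"
      using eps_lemma[of t s] by (auto simp: \<tau>_def F'_def)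
    then obtain c' where c': "\<forall>r\<in>S2. c' r \<ge> 0" "s - e *\<^sub>R t = (\<Sum>r\<in>S2. c' r *\<^sub>R r)"
      using S2(3) unfolding pos_hull_def by blast
    have "(\<Sum>r\<in>S2. (c' r + (if r = t then e else 0)) *\<^sub>R r) = (\<Sum>r\<in>S2. c' r *\<^sub>R r) + (\<Sum>r\<in>S2. (if r = t then e else 0) *\<^sub>R r)"
      by (simp add: scaleR_add_left sum.distrib)
    also have "(\<Sum>r\<in>S2. (if r = t then e else 0) *\<^sub>R r) = (\<Sum>r\<in>S2. if r = t then e *\<^sub>R t else 0)"
      by (intro sum.cong) auto
    also have "\<dots> = e *\<^sub>R t" using S2(1) t by (simp add: sum.delta')
    finally have "(\<Sum>r\<in>S2. (c' r + (if r = t then e else 0)) *\<^sub>R r) = s" using c'(2) by (simp add: algebra_simps)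
    then have "c t = c' t + (if t = t then e else 0)"
      using coords_unique[OF S2(1) S2(2), of c "\<lambda>r. c' r + (if r = t then e else 0)" t] c(2) t by simp
    moreover have "c' t \<ge> 0" using c'(1) t by blast
    ultimately show ?thesis using e(1) by simp
  qed
  have "\<forall>t\<in>S2. \<exists>dt. (\<forall>r\<in>S. dt r \<ge> 0) \<and> t = (\<Sum>r\<in>S. dt r *\<^sub>R r)"
  proof
    fix t assume t: "t \<in> S2"
    have "t \<in> \<tau>" using ph_mem[OF S2(1) t, of 1] S2(3) by simp
    then have "t \<in> pos_hull S" using \<tau>\<sigma> \<sigma>(2) by blast
    then show "\<exists>dt. (\<forall>r\<in>S. dt r \<ge> 0) \<and> t = (\<Sum>r\<in>S. dt r *\<^sub>R r)" unfolding pos_hull_def by blast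
  qed
  from bchoice[OF this] obtain d where d: "\<forall>t\<in>S2. (\<forall>r\<in>S. d t r \<ge> 0) \<and> t = (\<Sum>r\<in>S. d t r *\<^sub>R r)"
    by (elim exE)
  have "(\<Sum>r\<in>S. (\<Sum>t\<in>S2. c t * d t r) *\<^sub>R r) = (\<Sum>t\<in>S2. c t *\<^sub>R (\<Sum>r\<in>S. d t r *\<^sub>R r))"
    by (simp add: scaleR_sum_left scaleR_sum_right sum.swap[of _ S2 S])
  also have "\<dots> = (\<Sum>t\<in>S2. c t *\<^sub>R t)"
  proof (intro sum.cong refl)
    fix t assume "t \<in> S2"
    then have "(\<Sum>r\<in>S. d t r *\<^sub>R r) = t" using d by (metis (no_types))
    then show "c t *\<^sub>R (\<Sum>r\<in>S. d t r *\<^sub>R r) = c t *\<^sub>R t" by simp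
  qed
  also have "\<dots> = s" using c(2) by simp
  also have "s = (\<Sum>r\<in>S. (if r = s then 1 else 0) *\<^sub>R r)"
  proof -
    have "(\<Sum>r\<in>S. (if r = s then 1 else 0) *\<^sub>R r) = (\<Sum>r\<in>S. if r = s then s else 0)"
      by (intro sum.cong) auto
    then show ?thesis using S(1) s by (simp add: sum.delta')
  qed
  finally have eqS: "(\<Sum>r\<in>S. (\<Sum>t\<in>S2. c t * d t r) *\<^sub>R r) = (\<Sum>r\<in>S. (if r = s then 1 else 0) *\<^sub>R r)" .
  have dz: "d t r = 0" if t: "t \<in> S2" and r: "r \<in> S" "r \<noteq> s" for t r
  proof -
    have sum0: "(\<Sum>t\<in>S2. c t * d t r) = 0"
      using coords_unique[OF S(1) S(2) eqS r(1)] r(2) by simp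
    have nn: "\<forall>t\<in>S2. c t * d t r \<ge> 0"
    proof
      fix t assume "t \<in> S2"
      then have "c t \<ge> 0" "d t r \<ge> 0" using c(1) d r(1) by blast+
      then show "c t * d t r \<ge> 0" by simp
    qed
    have z: "(\<Sum>x\<in>S2. c x * d x r) = 0 \<longleftrightarrow> (\<forall>x\<in>S2. c x * d x r = 0)"
      by (rule sum_nonneg_eq_0_iff[OF S2(1)]) (use nn in blast)
    have "\<forall>x\<in>S2. c x * d x r = 0" using z sum0 by (rule iffD1)
    then have "c t * d t r = 0" using t by (rule bspec)
    then show ?thesis using cpos[OF t] by simp
  qed
  have tpar: "t = d t s *\<^sub>R s" if t: "t \<in> S2" for t
  proof -
    have "t = (\<Sum>r\<in>S. d t r *\<^sub>R r)" using d t by blast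
    also have "\<dots> = (\<Sum>r\<in>S. if r = s then d t s *\<^sub>R s else 0)"
      using dz[OF t] by (intro sum.cong) auto
    also have "\<dots> = d t s *\<^sub>R s" using S(1) s by (simp add: sum.delta')
    finally show ?thesis .
  qed
  have dpos: "d t s > 0" if t: "t \<in> S2" for t
  proof -
    have "t \<noteq> 0" using S2(2) t dependent_zero by blast
    then have "d t s \<noteq> 0" using tpar[OF t] by (metis scale_zero_left)
    moreover have "d t s \<ge> 0" using d t s by blast
    ultimately show ?thesis by simp
  qed
  have "S2 \<noteq> {}"
  proof
    assume "S2 = {}"
    then have "\<tau> = {0}" using S2(3) ph_empty by simp
    then show False using s\<tau> s0 by simp
  qed
  then obtain t0 where t0: "t0 \<in> S2" by blast
  have S2eq: "S2 = {t0}"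
  proof (rule ccontr)
    assume "S2 \<noteq> {t0}"
    then have "S2 - {t0} \<noteq> {}" using t0 by auto
    then obtain t1 where "t1 \<in> S2 - {t0}" by (meson ex_in_conv)
    then have t1: "t1 \<in> S2" "t1 \<noteq> t0" by simp_all
    have "independent {t0, t1}" by (rule independent_mono[OF S2(2)]) (use t0 t1 in auto)
    then have "t0 \<notin> span {t1}" using t1(2) by (simp add: real_vector.independent_insert)
    moreover have "t0 = (d t0 s / d t1 s) *\<^sub>R t1"
    proof -
      define a0 where "a0 = d t0 s"
      define a1 where "a1 = d t1 s"
      have e0: "t0 = a0 *\<^sub>R s" unfolding a0_def by (rule tpar[OF t0])
      have e1: "t1 = a1 *\<^sub>R s" unfolding a1_def by (rule tpar[OF t1(1)])
      have "a1 > 0" using dpos[OF t1(1)] a1_def by simp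
      then have "(a0 / a1) *\<^sub>R t1 = t0" using e0 e1 by simp
      then show ?thesis using a0_def a1_def by simp
    qed
    then have "t0 \<in> span {t1}" by (metis span_base span_scale singletonI)
    ultimately show False by simp
  qed
  define a0 where "a0 = d t0 s"
  have e0: "t0 = a0 *\<^sub>R s" unfolding a0_def by (rule tpar[OF t0])
  have a0p: "a0 > 0" using dpos[OF t0] a0_def by simp
  have \<tau>ray: "\<tau> = {c *\<^sub>R s | c. c \<ge> 0}"
  proof -
    have "\<tau> = {c *\<^sub>R t0 | c. c \<ge> 0}" using S2(3) S2eq ph_single by simp
    also have "\<dots> = {c *\<^sub>R s | c. c \<ge> 0}"
    proof (intro equalityI subsetI)
      fix x assume "x \<in> {c *\<^sub>R t0 | c. c \<ge> 0}"
      then obtain c where "c \<ge> 0" "x = c *\<^sub>R t0" by blast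
      then have "x = (c * a0) *\<^sub>R s" "c * a0 \<ge> 0" using e0 a0p by simp_all
      then show "x \<in> {c *\<^sub>R s | c. c \<ge> 0}" by blast
    next
      fix x assume "x \<in> {c *\<^sub>R s | c. c \<ge> 0}"
      then obtain c where "c \<ge> 0" "x = c *\<^sub>R s" by blast
      moreover have "s = (1 / a0) *\<^sub>R t0" using e0 a0p by simp
      ultimately have "x = (c / a0) *\<^sub>R t0" "c / a0 \<ge> 0" using a0p by simp_all
      then show "x \<in> {c *\<^sub>R t0 | c. c \<ge> 0}" by blast
    qed
    finally show ?thesis .
  qed
  have "aff_dim \<tau> = 1"
  proof (rule antisym)
    have "\<tau> \<subseteq> span {s}" using \<tau>ray by (auto intro: span_scale span_base)
    then have "aff_dim \<tau> \<le> aff_dim (span {s})" by (rule aff_dim_subset)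
    also have "\<dots> = 1" using s0 by (simp add: aff_dim_subspace dim_span)
    finally show "aff_dim \<tau> \<le> 1" .
    have "(0::real) *\<^sub>R s \<in> \<tau>" using \<tau>ray by blast
    then have "{0, s} \<subseteq> \<tau>" using s\<tau> by simp
    then have "aff_dim {0, s} \<le> aff_dim \<tau>" by (rule aff_dim_subset)
    then show "1 \<le> aff_dim \<tau>" using s0 by simp
  qed
  then have "\<tau> \<in> range (\<lambda>i. pos_hull {v i})" using rays \<tau>D unfolding ray_generators_def by blast
  then obtain j where "\<tau> = pos_hull {v j}" by blast
  then have "s \<in> pos_hull {v j}" using s\<tau> by simp
  then have "s \<in> {c *\<^sub>R v j | c. c \<ge> 0}" by (simp only: ph_single)
  then obtain \<gamma> where "\<gamma> \<ge> 0" "s = \<gamma> *\<^sub>R v j" by blast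
  moreover then have "\<gamma> \<noteq> 0" using s0 by auto
  ultimately show ?thesis by (intro exI[of _ j] exI[of _ \<gamma>]) simp
qed

end

definition cdata :: "('n \<Rightarrow> real^'d) \<Rightarrow> (real^'d) set \<Rightarrow> (real^'d) set \<Rightarrow> (real^'d \<Rightarrow> real^'d \<Rightarrow> real)
    \<Rightarrow> (real^'d \<Rightarrow> 'n) \<Rightarrow> (real^'d \<Rightarrow> real) \<Rightarrow> bool" where
  "cdata v \<tau> S g jj \<gamma> \<longleftrightarrow> finite S \<and> independent S \<and> \<tau> = pos_hull S \<and>
     (\<forall>s\<in>S. linear (g s) \<and> (\<forall>t\<in>S. g s t = (if s = t then 1 else 0))) \<and>
     (\<forall>s\<in>S. \<gamma> s > 0 \<and> s = \<gamma> s *\<^sub>R v (jj s))"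

definition Cc :: "(real^'d) set set \<Rightarrow> ('n::finite \<Rightarrow> real^'d) \<Rightarrow> real^'n \<Rightarrow> bool" where
  "Cc \<Delta> v h \<longleftrightarrow> (\<forall>\<tau>\<in>\<Delta>. \<exists>x. (\<forall>j. x \<bullet> v j \<le> h$j) \<and> (\<forall>j. v j \<in> \<tau> \<longrightarrow> x \<bullet> v j = h$j))"

lemma cdata_mem:
  assumes "cdata v \<tau> S g jj \<gamma>"
  shows "u \<in> \<tau> \<longleftrightarrow> (u = (\<Sum>s\<in>S. g s u *\<^sub>R s) \<and> (\<forall>s\<in>S. g s u \<ge> 0))"
proof
  assume "u \<in> \<tau>"
  then obtain c where c: "\<forall>s\<in>S. c s \<ge> 0" "u = (\<Sum>s\<in>S. c s *\<^sub>R s)"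
    using assms unfolding cdata_def pos_hull_def by blast
  have gc: "g t u = c t" if t: "t \<in> S" for t
  proof -
    have lin: "linear (g t)" using assms t unfolding cdata_def by blast
    have "g t u = (\<Sum>s\<in>S. c s * g t s)" using c(2) lin by (simp add: linear_sum linear_scale)
    also have "\<dots> = (\<Sum>s\<in>S. if s = t then c t else 0)"
      using assms t unfolding cdata_def by (intro sum.cong) auto
    also have "\<dots> = c t" using assms t unfolding cdata_def by (simp add: sum.delta')
    finally show ?thesis .
  qed
  have "(\<Sum>s\<in>S. g s u *\<^sub>R s) = (\<Sum>s\<in>S. c s *\<^sub>R s)" by (intro sum.cong) (auto simp: gc)
  then show "u = (\<Sum>s\<in>S. g s u *\<^sub>R s) \<and> (\<forall>s\<in>S. g s u \<ge> 0)" using c gc by simp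
next
  assume a: "u = (\<Sum>s\<in>S. g s u *\<^sub>R s) \<and> (\<forall>s\<in>S. g s u \<ge> 0)"
  have ex: "\<exists>c. (\<forall>s\<in>S. 0 \<le> c s) \<and> u = (\<Sum>s\<in>S. c s *\<^sub>R s)"
    by (rule exI[of _ "\<lambda>s. g s u"]) (use a in blast)
  have \<tau>: "\<tau> = pos_hull S" using assms unfolding cdata_def by blast
  show "u \<in> \<tau>" unfolding \<tau> pos_hull_def using ex by (simp only: mem_Collect_eq)
qed

lemma cdata_vj:
  assumes "cdata v \<tau> S g jj \<gamma>" "s \<in> S"
  shows "v (jj s) \<in> \<tau>"
proof -
  have S: "finite S" "\<tau> = pos_hull S" "\<gamma> s > 0" "\<gamma> s *\<^sub>R v (jj s) = s"
    using assms unfolding cdata_def by auto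
  have "(1 / \<gamma> s) *\<^sub>R s \<in> pos_hull S" using S(3) by (intro ph_mem[OF S(1) assms(2)]) simp
  moreover have "(1 / \<gamma> s) *\<^sub>R s = v (jj s)"
  proof -
    have "(1 / \<gamma> s) *\<^sub>R s = (1 / \<gamma> s) *\<^sub>R (\<gamma> s *\<^sub>R v (jj s))" using S(4) by simp
    also have "\<dots> = v (jj s)" using S(3) by simp
    finally show ?thesis .
  qed
  ultimately show ?thesis using S(2) by simp
qed

lemma cdata_expand:
  assumes "cdata v \<tau> S g jj \<gamma>" "u \<in> \<tau>"
  shows "u = (\<Sum>s\<in>S. (g s u * \<gamma> s) *\<^sub>R v (jj s))" "\<forall>s\<in>S. g s u * \<gamma> s \<ge> 0"
proof -
  have u: "u = (\<Sum>s\<in>S. g s u *\<^sub>R s)" "\<forall>s\<in>S. g s u \<ge> 0" using cdata_mem[OF assms(1)] assms(2) by auto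
  have e: "\<gamma> s *\<^sub>R v (jj s) = s" "\<gamma> s > 0" if "s \<in> S" for s using assms(1) that unfolding cdata_def by auto
  have "(\<Sum>s\<in>S. g s u *\<^sub>R s) = (\<Sum>s\<in>S. (g s u * \<gamma> s) *\<^sub>R v (jj s))"
  proof (intro sum.cong refl)
    fix s assume s: "s \<in> S"
    have "(g s u * \<gamma> s) *\<^sub>R v (jj s) = g s u *\<^sub>R (\<gamma> s *\<^sub>R v (jj s))" by simp
    also have "\<dots> = g s u *\<^sub>R s" using e(1)[OF s] by simp
    finally show "g s u *\<^sub>R s = (g s u * \<gamma> s) *\<^sub>R v (jj s)" by simp
  qed
  then show "u = (\<Sum>s\<in>S. (g s u * \<gamma> s) *\<^sub>R v (jj s))" using u(1) by simp
  show "\<forall>s\<in>S. g s u * \<gamma> s \<ge> 0" using u(2) e(2) by (simp add: less_imp_le)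
qed

lemma sv_nth: "support_vector v P $ j = support_fn P (v j)"
  by (simp add: support_vector_def)

context fanctx begin

lemma cone_data: "\<tau> \<in> \<Delta> \<Longrightarrow> \<exists>S g jj \<gamma>. cdata v \<tau> S g jj \<gamma>"
proof -
  assume \<tau>: "\<tau> \<in> \<Delta>"
  obtain S where S: "finite S" "independent S" "\<tau> = pos_hull S" using simpl[OF \<tau>] by blast
  have "\<forall>s\<in>S. \<exists>gs::real^'d \<Rightarrow> real. linear gs \<and> (\<forall>t\<in>S. gs t = (if s = t then 1 else 0))"
  proof
    fix s assume "s \<in> S"
    show "\<exists>gs::real^'d \<Rightarrow> real. linear gs \<and> (\<forall>t\<in>S. gs t = (if s = t then 1 else 0))"
      using real_vector.linear_independent_extend[OF S(2), of "\<lambda>t. if s = t then (1::real) else 0"] by blast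
  qed
  from bchoice[OF this] obtain g :: "real^'d \<Rightarrow> real^'d \<Rightarrow> real" where g: "\<forall>s\<in>S. linear (g s) \<and> (\<forall>t\<in>S. g s t = (if s = t then 1 else 0))"
    by (elim exE)
  have "\<forall>s\<in>S. \<exists>p. snd p > 0 \<and> s = snd p *\<^sub>R v (fst p)"
  proof
    fix s assume "s \<in> S"
    then obtain j \<gamma> where "\<gamma> > 0" "s = \<gamma> *\<^sub>R v j" using ray_ident[OF \<tau> S(3) S(1) S(2)] by blast
    then show "\<exists>p. snd p > 0 \<and> s = snd p *\<^sub>R v (fst p)" by (intro exI[of _ "(j, \<gamma>)"]) simp
  qed
  from bchoice[OF this] obtain p where p: "\<forall>s\<in>S. snd (p s) > 0 \<and> s = snd (p s) *\<^sub>R v (fst (p s))"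
    by (elim exE)
  have "cdata v \<tau> S g (\<lambda>s. fst (p s)) (\<lambda>s. snd (p s))"
    unfolding cdata_def using S g p by blast
  then show ?thesis by blast
qed

lemma sf_formula:
  assumes P: "P \<in> deformation_cone \<Delta>" and cd: "cdata v \<tau> S g jj \<gamma>" and \<tau>: "\<tau> \<in> \<Delta>" and u: "u \<in> \<tau>"
  shows "support_fn P u = (\<Sum>s\<in>S. (g s u * \<gamma> s) * support_fn P (v (jj s)))"
proof -
  obtain \<sigma> where \<sigma>: "\<sigma> \<in> normal_fan P" "\<tau> \<subseteq> \<sigma>"
    using P \<tau> unfolding deformation_cone_def coarsened_by_def by blast
  then obtain F where F: "F face_of P" "F \<noteq> {}" "\<sigma> = normal_cone P F" unfolding normal_fan_def by blast
  then obtain x where x: "x \<in> F" by blast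
  have xw: "x \<bullet> w = support_fn P w" if "w \<in> \<tau>" for w using x that \<sigma>(2) F(3) unfolding normal_cone_def by blast
  have "support_fn P u = x \<bullet> u" using xw[OF u] by simp
  also have "\<dots> = x \<bullet> (\<Sum>s\<in>S. (g s u * \<gamma> s) *\<^sub>R v (jj s))" using cdata_expand(1)[OF cd u] by simp
  also have "\<dots> = (\<Sum>s\<in>S. (g s u * \<gamma> s) * (x \<bullet> v (jj s)))" by (simp add: inner_sum_right)
  also have "\<dots> = (\<Sum>s\<in>S. (g s u * \<gamma> s) * support_fn P (v (jj s)))"
    using xw cdata_vj[OF cd] by (intro sum.cong) auto
  finally show ?thesis .
qed

lemma H1: "P \<in> deformation_cone \<Delta> \<Longrightarrow> Cc \<Delta> v (support_vector v P)"
  unfolding Cc_def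
proof
  fix \<tau> assume P: "P \<in> deformation_cone \<Delta>" and \<tau>: "\<tau> \<in> \<Delta>"
  obtain \<sigma> where \<sigma>: "\<sigma> \<in> normal_fan P" "\<tau> \<subseteq> \<sigma>"
    using P \<tau> unfolding deformation_cone_def coarsened_by_def by blast
  then obtain F where F: "F face_of P" "F \<noteq> {}" "\<sigma> = normal_cone P F" unfolding normal_fan_def by blast
  then obtain x where x: "x \<in> F" by blast
  have xP: "x \<in> P" using x F(1) face_of_imp_subset by blast
  have bP: "bounded P" using P unfolding deformation_cone_def by (simp add: polytope_imp_bounded)
  show "\<exists>x. (\<forall>j. x \<bullet> v j \<le> support_vector v P $ j) \<and> (\<forall>j. v j \<in> \<tau> \<longrightarrow> x \<bullet> v j = support_vector v P $ j)"
  proof (intro exI conjI allI impI)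
    fix j show "x \<bullet> v j \<le> support_vector v P $ j" using sf_upper[OF bP xP] by (simp add: sv_nth)
  next
    fix j assume "v j \<in> \<tau>"
    then show "x \<bullet> v j = support_vector v P $ j" using x \<sigma>(2) F(3) unfolding normal_cone_def sv_nth by blast
  qed
qed

lemma PS: "\<exists>lam. (\<forall>j. lam j \<ge> 0) \<and> u = (\<Sum>j\<in>UNIV. lam j *\<^sub>R v j)"
proof -
  obtain \<tau> where \<tau>: "\<tau> \<in> \<Delta>" "u \<in> \<tau>" using complete by blast
  obtain S g jj \<gamma> where cd: "cdata v \<tau> S g jj \<gamma>" using cone_data[OF \<tau>(1)] by blast
  have fS: "finite S" using cd unfolding cdata_def by blast
  define w where "w s = g s u * \<gamma> s" for s
  have u: "u = (\<Sum>s\<in>S. w s *\<^sub>R v (jj s))" "\<forall>s\<in>S. w s \<ge> 0"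
    using cdata_expand[OF cd \<tau>(2)] by (simp_all add: w_def)
  define lam where "lam j = (\<Sum>s\<in>{s\<in>S. jj s = j}. w s)" for j
  have "(\<Sum>j\<in>UNIV. lam j *\<^sub>R v j) = (\<Sum>j\<in>UNIV. (\<Sum>s\<in>{s\<in>S. jj s = j}. w s *\<^sub>R v (jj s)))"
    unfolding lam_def by (intro sum.cong refl) (auto simp: scaleR_sum_left)
  also have "\<dots> = (\<Sum>s\<in>S. w s *\<^sub>R v (jj s))" using fS by (intro sum.group) auto
  finally have "u = (\<Sum>j\<in>UNIV. lam j *\<^sub>R v j)" using u(1) by simp
  moreover have "\<forall>j. lam j \<ge> 0" using u(2) unfolding lam_def by (auto intro!: sum_nonneg)
  ultimately show ?thesis by blast
qed

end

context fanctx begin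

lemma bound: "\<exists>B. \<forall>h x. (\<forall>j. x \<bullet> v j \<le> h$j) \<longrightarrow> norm x \<le> B * norm h"
proof -
  have "\<forall>u. \<exists>lam. (\<forall>j. lam j \<ge> 0) \<and> u = (\<Sum>j\<in>UNIV. lam j *\<^sub>R v j)" using PS by blast
  from choice[OF this] obtain lam where lam: "\<And>u. (\<forall>j. lam u j \<ge> 0) \<and> u = (\<Sum>j\<in>UNIV. lam u j *\<^sub>R v j)"
    by blast
  define L where "L u = (\<Sum>j\<in>UNIV. lam u j)" for u
  have Lnn: "L u \<ge> 0" for u unfolding L_def using lam by (simp add: sum_nonneg)
  have one: "x \<bullet> u \<le> L u * norm h" if x: "\<forall>j. x \<bullet> v j \<le> h$j" for x h u
  proof -
    have "x \<bullet> u = x \<bullet> (\<Sum>j\<in>UNIV. lam u j *\<^sub>R v j)" using lam[of u] by simp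
    also have "\<dots> = (\<Sum>j\<in>UNIV. lam u j * (x \<bullet> v j))" by (simp add: inner_sum_right)
    also have "\<dots> \<le> (\<Sum>j\<in>UNIV. lam u j * norm h)"
    proof (rule sum_mono)
      fix j
      have "x \<bullet> v j \<le> norm h" using x[rule_format, of j] component_le_norm_cart[of h j] by simp
      then show "lam u j * (x \<bullet> v j) \<le> lam u j * norm h" using lam[of u] by (simp add: mult_left_mono)
    qed
    also have "\<dots> = L u * norm h" by (simp add: L_def sum_distrib_right)
    finally show ?thesis .
  qed
  define B where "B = (\<Sum>b\<in>Basis. L b + L (- b))"
  have "norm x \<le> B * norm h" if x: "\<forall>j. x \<bullet> v j \<le> h$j" for x h
  proof -
    have "norm x \<le> (\<Sum>b\<in>Basis. \<bar>x \<bullet> b\<bar>)" by (rule norm_le_l1)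
    also have "\<dots> \<le> (\<Sum>b\<in>Basis. (L b + L (- b)) * norm h)"
    proof (rule sum_mono)
      fix b :: "real^'d"
      have "x \<bullet> b \<le> L b * norm h" using one[OF x] .
      moreover have "- (x \<bullet> b) \<le> L (-b) * norm h" using one[OF x, of "-b"] by simp
      moreover have "L b * norm h \<ge> 0" "L (-b) * norm h \<ge> 0" using Lnn by simp_all
      ultimately show "\<bar>x \<bullet> b\<bar> \<le> (L b + L (- b)) * norm h" by (simp add: algebra_simps)
    qed
    also have "\<dots> = B * norm h" by (simp add: B_def sum_distrib_right)
    finally show ?thesis .
  qed
  then show ?thesis by blast
qed

lemma H2:
  assumes C: "Cc \<Delta> v h"
  shows "\<exists>P\<in>deformation_cone \<Delta>. support_vector v P = h"
proof -
  define P where "P = {x. \<forall>j. x \<bullet> v j \<le> h$j}"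
  obtain B where B: "\<forall>h x. (\<forall>j. x \<bullet> v j \<le> h$j) \<longrightarrow> norm x \<le> B * norm h" using bound by blast
  have bP: "bounded P" unfolding bounded_iff P_def using B by blast
  have "P = \<Inter> (range (\<lambda>j. {x. v j \<bullet> x \<le> h$j}))" by (auto simp: P_def inner_commute)
  moreover have "polyhedron (\<Inter> (range (\<lambda>j. {x. v j \<bullet> x \<le> h$j})))"
    by (intro polyhedron_Inter) (auto intro: polyhedron_halfspace_le)
  ultimately have polyP: "polyhedron P" by simp
  have ptP: "polytope P" using polyP bP by (simp add: polytope_eq_bounded_polyhedron)
  have Cx: "\<exists>x. x \<in> P \<and> (\<forall>j. v j \<in> \<tau> \<longrightarrow> x \<bullet> v j = h$j)" if "\<tau> \<in> \<Delta>" for \<tau>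
    using C that unfolding Cc_def P_def by blast
  obtain \<tau>0 where "\<tau>0 \<in> \<Delta>" using Delta_ne by blast
  then have neP: "P \<noteq> {}" using Cx by blast
  have sv: "support_vector v P = h"
  proof (unfold vec_eq_iff sv_nth, rule allI)
    fix j
    have "v j \<in> pos_hull {v j}" using ph_mem[of "{v j}" "v j" 1] by simp
    then obtain x where x: "x \<in> P" "x \<bullet> v j = h$j" using Cx[OF ray_in] by blast
    have "\<forall>y\<in>P. y \<bullet> v j \<le> x \<bullet> v j" using x(2) by (auto simp: P_def)
    then show "support_fn P (v j) = h$j" using sf_attain[OF x(1)] x(2) by simp
  qed
  have coarse: "coarsened_by (normal_fan P) \<Delta>"
    unfolding coarsened_by_def
  proof
    fix \<tau> assume \<tau>: "\<tau> \<in> \<Delta>"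
    obtain S g jj \<gamma> where cd: "cdata v \<tau> S g jj \<gamma>" using cone_data[OF \<tau>] by blast
    obtain x where x: "x \<in> P" "\<forall>j. v j \<in> \<tau> \<longrightarrow> x \<bullet> v j = h$j" using Cx[OF \<tau>] by blast
    have att: "x \<bullet> u = support_fn P u" if u: "u \<in> \<tau>" for u
    proof -
      have ue: "u = (\<Sum>s\<in>S. (g s u * \<gamma> s) *\<^sub>R v (jj s))" "\<forall>s\<in>S. g s u * \<gamma> s \<ge> 0"
        using cdata_expand[OF cd u] by simp_all
      have "y \<bullet> u \<le> x \<bullet> u" if y: "y \<in> P" for y
      proof -
        have "y \<bullet> u = (\<Sum>s\<in>S. (g s u * \<gamma> s) * (y \<bullet> v (jj s)))"
          by (subst ue(1)) (simp add: inner_sum_right)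
        also have "\<dots> \<le> (\<Sum>s\<in>S. (g s u * \<gamma> s) * h$(jj s))"
        proof (rule sum_mono)
          fix s assume s: "s \<in> S"
          have "y \<bullet> v (jj s) \<le> h$(jj s)" using y by (simp add: P_def)
          then show "(g s u * \<gamma> s) * (y \<bullet> v (jj s)) \<le> (g s u * \<gamma> s) * h$(jj s)"
            using ue(2) s by (simp add: mult_left_mono)
        qed
        also have "\<dots> = (\<Sum>s\<in>S. (g s u * \<gamma> s) * (x \<bullet> v (jj s)))"
          using x(2) cdata_vj[OF cd] by (intro sum.cong) auto
        also have "\<dots> = x \<bullet> u"
          by (subst (2) ue(1)) (simp add: inner_sum_right)
        finally show ?thesis .
      qed
      then show ?thesis using sf_attain[OF x(1)] by simp
    qed
    have "\<tau> \<noteq> {}" using cd ph_zero unfolding cdata_def by blast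
    then show "\<exists>\<sigma>\<in>normal_fan P. \<tau> \<subseteq> \<sigma>" using char_coarse[OF ptP x(1)] att by blast
  qed
  have "P \<in> deformation_cone \<Delta>" unfolding deformation_cone_def using ptP neP coarse by blast
  then show ?thesis using sv by blast
qed

lemma Hchar: "support_vector v ` deformation_cone \<Delta> = {h. Cc \<Delta> v h}"
  using H1 H2 by fastforce

lemma Cc_zero: "Cc \<Delta> v 0"
  unfolding Cc_def by (auto intro!: exI[of _ 0])

lemma Cc_convex: "convex {h. Cc \<Delta> v h}"
  unfolding convex_def
proof (intro ballI allI impI, unfold mem_Collect_eq)
  fix h1 h2 :: "real^'n" and a b :: real
  assume h: "Cc \<Delta> v h1" "Cc \<Delta> v h2" and ab: "0 \<le> a" "0 \<le> b" "a + b = 1"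
  show "Cc \<Delta> v (a *\<^sub>R h1 + b *\<^sub>R h2)"
    unfolding Cc_def
  proof
    fix \<tau> assume "\<tau> \<in> \<Delta>"
    then obtain x1 x2 where x1: "\<forall>j. x1 \<bullet> v j \<le> h1$j" "\<forall>j. v j \<in> \<tau> \<longrightarrow> x1 \<bullet> v j = h1$j"
      and x2: "\<forall>j. x2 \<bullet> v j \<le> h2$j" "\<forall>j. v j \<in> \<tau> \<longrightarrow> x2 \<bullet> v j = h2$j"
      using h unfolding Cc_def by meson
    show "\<exists>x. (\<forall>j. x \<bullet> v j \<le> (a *\<^sub>R h1 + b *\<^sub>R h2) $ j) \<and> (\<forall>j. v j \<in> \<tau> \<longrightarrow> x \<bullet> v j = (a *\<^sub>R h1 + b *\<^sub>R h2) $ j)"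
    proof (intro exI[of _ "a *\<^sub>R x1 + b *\<^sub>R x2"] conjI allI impI)
      fix j
      have "a * (x1 \<bullet> v j) \<le> a * h1$j" using x1(1) ab(1) by (simp add: mult_left_mono)
      moreover have "b * (x2 \<bullet> v j) \<le> b * h2$j" using x2(1) ab(2) by (simp add: mult_left_mono)
      ultimately show "(a *\<^sub>R x1 + b *\<^sub>R x2) \<bullet> v j \<le> (a *\<^sub>R h1 + b *\<^sub>R h2) $ j"
        by (simp add: inner_add_left)
    next
      fix j assume "v j \<in> \<tau>"
      then show "(a *\<^sub>R x1 + b *\<^sub>R x2) \<bullet> v j = (a *\<^sub>R h1 + b *\<^sub>R h2) $ j"
        using x1(2) x2(2) by (simp add: inner_add_left)
    qed
  qed
qed

lemma Cc_closed: "closed {h. Cc \<Delta> v h}"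
  unfolding closed_sequential_limits
proof (intro allI impI, elim conjE)
  fix hs :: "nat \<Rightarrow> real^'n" and l
  assume hs: "\<forall>n. hs n \<in> {h. Cc \<Delta> v h}" and lim: "hs \<longlonglongrightarrow> l"
  obtain B where B: "\<forall>h x. (\<forall>j. x \<bullet> v j \<le> h$j) \<longrightarrow> norm x \<le> B * norm h" using bound by blast
  obtain K where K: "\<forall>n. norm (hs n) \<le> K"
  proof -
    have "Bseq hs" using lim by (intro convergent_imp_Bseq) (auto simp: convergent_def)
    then show ?thesis unfolding Bseq_def using that by (meson less_imp_le)
  qed
  show "l \<in> {h. Cc \<Delta> v h}"
    unfolding mem_Collect_eq Cc_def
  proof
    fix \<tau> assume \<tau>: "\<tau> \<in> \<Delta>"
    have "\<forall>n. \<exists>x. (\<forall>j. x \<bullet> v j \<le> hs n $ j) \<and> (\<forall>j. v j \<in> \<tau> \<longrightarrow> x \<bullet> v j = hs n $ j)"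
      using hs \<tau> unfolding Cc_def by blast
    from choice[OF this] obtain X where X: "\<forall>n. (\<forall>j. X n \<bullet> v j \<le> hs n $ j) \<and> (\<forall>j. v j \<in> \<tau> \<longrightarrow> X n \<bullet> v j = hs n $ j)"
      by (elim exE)
    have "norm (X n) \<le> \<bar>B\<bar> * K" for n
    proof -
      have "norm (X n) \<le> B * norm (hs n)" using B X by blast
      also have "\<dots> \<le> \<bar>B\<bar> * norm (hs n)" by (simp add: mult_right_mono)
      also have "\<dots> \<le> \<bar>B\<bar> * K" using K by (simp add: mult_left_mono)
      finally show ?thesis .
    qed
    then have "bounded (range X)" unfolding bounded_iff by blast
    then obtain x r where r: "strict_mono r" "(X \<circ> r) \<longlonglongrightarrow> x"
      using bounded_imp_convergent_subsequence by blast
    have lr: "(hs \<circ> r) \<longlonglongrightarrow> l" using LIMSEQ_subseq_LIMSEQ[OF lim r(1)] .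
    have limx: "(\<lambda>n. X (r n) \<bullet> v j) \<longlonglongrightarrow> x \<bullet> v j" for j
      using r(2) by (intro tendsto_inner tendsto_const) (simp add: o_def)
    have limh: "(\<lambda>n. hs (r n) $ j) \<longlonglongrightarrow> l $ j" for j
      using lr by (intro tendsto_vec_nth) (simp add: o_def)
    show "\<exists>x. (\<forall>j. x \<bullet> v j \<le> l $ j) \<and> (\<forall>j. v j \<in> \<tau> \<longrightarrow> x \<bullet> v j = l $ j)"
    proof (intro exI[of _ x] conjI allI impI)
      fix j
      show "x \<bullet> v j \<le> l $ j"
        using limx[of j] limh[of j] X by (intro LIMSEQ_le) auto
    next
      fix j assume "v j \<in> \<tau>"
      then have "(\<lambda>n. X (r n) \<bullet> v j) = (\<lambda>n. hs (r n) $ j)" using X by auto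
      then show "x \<bullet> v j = l $ j" using limx[of j] limh[of j] LIMSEQ_unique by metis
    qed
  qed
qed

end

lemma annih:
  fixes W :: "(real^'n) set"
  assumes W: "subspace W"
  shows "\<exists>B0. finite B0 \<and> W = {z. \<forall>b\<in>B0. b \<bullet> z = 0}"
proof -
  define C where "C = {y. \<forall>w\<in>W. orthogonal w y}"
  have sC: "subspace C" unfolding C_def by (rule subspace_orthogonal_to_vectors)
  obtain B0 where B0: "B0 \<subseteq> C" "independent B0" "C \<subseteq> span B0" "card B0 = dim C"
    by (rule basis_exists)
  have fB0: "finite B0" using B0(2) by (rule finiteI_independent)
  have "W = {z. \<forall>b\<in>B0. b \<bullet> z = 0}"
  proof (intro equalityI subsetI)
    fix z assume "z \<in> W"
    then show "z \<in> {z. \<forall>b\<in>B0. b \<bullet> z = 0}"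
      using B0(1) by (auto simp: C_def orthogonal_def inner_commute)
  next
    fix z assume z: "z \<in> {z. \<forall>b\<in>B0. b \<bullet> z = 0}"
    obtain y z' where yz: "y \<in> span W" "\<And>w. w \<in> span W \<Longrightarrow> orthogonal z' w" "z = y + z'"
      using orthogonal_subspace_decomp_exists[of W z] by blast
    have sW: "span W = W" using W by (simp add: span_eq_iff)
    have yW: "y \<in> W" using yz(1) sW by (simp only:)
    have "z' \<in> C" unfolding C_def using yz(2) span_base by (auto simp: orthogonal_commute)
    then have "z' \<in> span B0" using B0(3) by blast
    then have oz: "orthogonal z z'"
      by (rule orthogonal_to_span) (use z in \<open>auto simp: orthogonal_def inner_commute\<close>)
    have oy: "orthogonal z' y" using yz(2) yz(1) by blast
    have h1: "z \<bullet> z' = 0" using oz by (simp add: orthogonal_def)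
    have h2: "y \<bullet> z' = 0" using oy by (simp add: orthogonal_def inner_commute)
    have "z \<bullet> z' = y \<bullet> z' + z' \<bullet> z'" using yz(3) by (simp add: inner_add_left)
    then have "z' \<bullet> z' = 0" using h1 h2 by simp
    then have "z' = 0" by simp
    then show "z \<in> W" using yz(3) yW by simp
  qed
  then show ?thesis using fB0 by blast
qed

lemma det_char:
  fixes a :: "'m::finite \<Rightarrow> real^'n" and B0 :: "(real^'n) set"
  assumes fB: "finite B0"
  shows "det (\<chi> j l. (\<Sum>i\<in>UNIV. a i $ j * a i $ l) + (\<Sum>b\<in>B0. b $ j * b $ l)) \<noteq> 0 \<longleftrightarrow>
         (\<forall>z. (\<forall>i. a i \<bullet> z = 0) \<and> (\<forall>b\<in>B0. b \<bullet> z = 0) \<longrightarrow> z = 0)"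
proof -
  define M :: "real^'n^'n" where "M = (\<chi> j l. (\<Sum>i\<in>UNIV. a i $ j * a i $ l) + (\<Sum>b\<in>B0. b $ j * b $ l))"
  have Mz: "M *v z = (\<Sum>i\<in>UNIV. (a i \<bullet> z) *\<^sub>R a i) + (\<Sum>b\<in>B0. (b \<bullet> z) *\<^sub>R b)" for z
  proof -
    have "(M *v z) $ j = ((\<Sum>i\<in>UNIV. (a i \<bullet> z) *\<^sub>R a i) + (\<Sum>b\<in>B0. (b \<bullet> z) *\<^sub>R b)) $ j" for j
    proof -
      have "(M *v z) $ j = (\<Sum>l\<in>UNIV. ((\<Sum>i\<in>UNIV. a i $ j * a i $ l) + (\<Sum>b\<in>B0. b $ j * b $ l)) * z $ l)"
        by (simp add: M_def matrix_vector_mult_def)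
      also have "\<dots> = (\<Sum>l\<in>UNIV. \<Sum>i\<in>UNIV. a i $ j * a i $ l * z $ l) + (\<Sum>l\<in>UNIV. \<Sum>b\<in>B0. b $ j * b $ l * z $ l)"
        by (simp add: distrib_right sum_distrib_right sum.distrib)
      also have "\<dots> = (\<Sum>i\<in>UNIV. \<Sum>l\<in>UNIV. a i $ j * a i $ l * z $ l) + (\<Sum>b\<in>B0. \<Sum>l\<in>UNIV. b $ j * b $ l * z $ l)"
      proof -
        have "(\<Sum>l\<in>UNIV. \<Sum>i\<in>UNIV. a i $ j * a i $ l * z $ l) = (\<Sum>i\<in>UNIV. \<Sum>l\<in>UNIV. a i $ j * a i $ l * z $ l)"
          by (rule sum.swap)
        moreover have "(\<Sum>l\<in>UNIV. \<Sum>b\<in>B0. b $ j * b $ l * z $ l) = (\<Sum>b\<in>B0. \<Sum>l\<in>UNIV. b $ j * b $ l * z $ l)"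
          by (rule sum.swap)
        ultimately show ?thesis by simp
      qed
      also have "\<dots> = (\<Sum>i\<in>UNIV. (a i \<bullet> z) * a i $ j) + (\<Sum>b\<in>B0. (b \<bullet> z) * b $ j)"
      proof -
        have "(\<Sum>l\<in>UNIV. a i $ j * a i $ l * z $ l) = (a i \<bullet> z) * a i $ j" for i
          by (simp add: inner_vec_def sum_distrib_left mult.commute mult.left_commute)
        moreover have "(\<Sum>l\<in>UNIV. b $ j * b $ l * z $ l) = (b \<bullet> z) * b $ j" for b
          by (simp add: inner_vec_def sum_distrib_left mult.commute mult.left_commute)
        ultimately show ?thesis by simp
      qed
      also have "\<dots> = ((\<Sum>i\<in>UNIV. (a i \<bullet> z) *\<^sub>R a i) + (\<Sum>b\<in>B0. (b \<bullet> z) *\<^sub>R b)) $ j"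
        by simp
      finally show ?thesis .
    qed
    then show ?thesis by (simp add: vec_eq_iff)
  qed
  have zMz: "z \<bullet> (M *v z) = (\<Sum>i\<in>UNIV. (a i \<bullet> z)^2) + (\<Sum>b\<in>B0. (b \<bullet> z)^2)" for z
    by (simp add: Mz inner_add_right inner_sum_right power2_eq_square inner_commute)
  have ker: "M *v z = 0 \<longleftrightarrow> (\<forall>i. a i \<bullet> z = 0) \<and> (\<forall>b\<in>B0. b \<bullet> z = 0)" for z
  proof
    assume "M *v z = 0"
    then have "(\<Sum>i\<in>UNIV. (a i \<bullet> z)^2) + (\<Sum>b\<in>B0. (b \<bullet> z)^2) = 0" using zMz[of z] by simp
    moreover have "(\<Sum>i\<in>UNIV. (a i \<bullet> z)^2) \<ge> 0" "(\<Sum>b\<in>B0. (b \<bullet> z)^2) \<ge> 0" by (simp_all add: sum_nonneg)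
    ultimately have "(\<Sum>i\<in>UNIV. (a i \<bullet> z)^2) = 0" "(\<Sum>b\<in>B0. (b \<bullet> z)^2) = 0" by linarith+
    then show "(\<forall>i. a i \<bullet> z = 0) \<and> (\<forall>b\<in>B0. b \<bullet> z = 0)"
      using fB by (simp add: sum_nonneg_eq_0_iff)
  next
    assume "(\<forall>i. a i \<bullet> z = 0) \<and> (\<forall>b\<in>B0. b \<bullet> z = 0)"
    then show "M *v z = 0" by (simp add: Mz)
  qed
  have "det M \<noteq> 0 \<longleftrightarrow> inj ((*v) M)"
    using det_nz_iff_inj[OF matrix_vector_mul_linear[of M]] by (simp add: matrix_of_matrix_vector_mul)
  also have "\<dots> \<longleftrightarrow> (\<forall>z. M *v z = 0 \<longrightarrow> z = 0)"
    using linear_injective_0[OF matrix_vector_mul_linear[of M]] by simp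
  finally show ?thesis unfolding M_def[symmetric] using ker by simp
qed

lemma polyfun_nth_comp:
  fixes g :: "real^'d \<Rightarrow> real"
  assumes "linear g"
  shows "polyfun (\<lambda>U::real^'d^'m. g (U $ i))"
proof -
  have "linear (\<lambda>U::real^'d^'m. U $ i)" by (rule bounded_linear.linear[OF bounded_linear_vec_nth])
  then have "linear (g \<circ> (\<lambda>U::real^'d^'m. U $ i))" using assms by (rule linear_compose)
  then show ?thesis using polyfun_linear by (simp add: o_def)
qed

theorem proposition3p8:
  fixes \<Delta> :: "(real^'d) set set" and v :: "'n::finite \<Rightarrow> real^'d"
  assumes "polytopal_fan \<Delta>" and "simplicial_fan \<Delta>" and "ray_generators \<Delta> v"
  shows "semialgebraic {U :: real^'d^'m. \<forall>y. card (lse \<Delta> v U y) = 1}"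
proof -
  obtain Q where Q0: "polytope Q \<and> Q \<noteq> {} \<and> \<Delta> = normal_fan Q"
    using assms(1) unfolding polytopal_fan_def by (rule exE)
  then have Q: "polytope Q" "Q \<noteq> {}" "\<Delta> = normal_fan Q" by simp_all
  interpret F: fanctx Q \<Delta> v unfolding fanctx_def using Q assms(2,3) by (intro conjI)
  define D where "D = deformation_cone \<Delta>"
  define H where "H = support_vector v ` D"
  have HC: "H = {h. Cc \<Delta> v h}" using F.Hchar by (simp add: H_def D_def)
  have Hcv: "convex H" using F.Cc_convex HC by simp
  have Hcl: "closed H" using F.Cc_closed HC by simp
  have H0: "0 \<in> H" using F.Cc_zero HC by simp
  obtain B0 where B0: "finite B0" "span H = {z. \<forall>b\<in>B0. b \<bullet> z = 0}"
    using annih[OF subspace_span[of H]] by blast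
  have "\<forall>\<tau>\<in>\<Delta>. \<exists>S g jj \<gamma>. cdata v \<tau> S g jj \<gamma>" using F.cone_data by blast
  from bchoice[OF this] obtain SS :: "(real^'d) set \<Rightarrow> (real^'d) set"
    where h1: "\<forall>\<tau>\<in>\<Delta>. \<exists>g jj \<gamma>. cdata v \<tau> (SS \<tau>) g jj \<gamma>" by (elim exE)
  from bchoice[OF h1] obtain gg :: "(real^'d) set \<Rightarrow> real^'d \<Rightarrow> real^'d \<Rightarrow> real"
    where h2: "\<forall>\<tau>\<in>\<Delta>. \<exists>jj \<gamma>. cdata v \<tau> (SS \<tau>) (gg \<tau>) jj \<gamma>" by (elim exE)
  from bchoice[OF h2] obtain JJ :: "(real^'d) set \<Rightarrow> real^'d \<Rightarrow> 'n"
    where h3: "\<forall>\<tau>\<in>\<Delta>. \<exists>\<gamma>. cdata v \<tau> (SS \<tau>) (gg \<tau>) (JJ \<tau>) \<gamma>" by (elim exE)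
  from bchoice[OF h3] obtain GG :: "(real^'d) set \<Rightarrow> real^'d \<Rightarrow> real"
    where cd: "\<forall>\<tau>\<in>\<Delta>. cdata v \<tau> (SS \<tau>) (gg \<tau>) (JJ \<tau>) (GG \<tau>)" by (elim exE)
  have cdS: "finite (SS \<tau>)" "\<forall>s\<in>SS \<tau>. linear (gg \<tau> s)" if "\<tau> \<in> \<Delta>" for \<tau>
    using cd that unfolding cdata_def by auto
  define Lv :: "(real^'d) set \<Rightarrow> real^'d \<Rightarrow> real^'n" where
    "Lv \<tau> u = (\<Sum>s\<in>SS \<tau>. (gg \<tau> s u * GG \<tau> s) *\<^sub>R axis (JJ \<tau> s) (1::real))" for \<tau> u
  have Lv_sf: "support_fn P u = Lv \<tau> u \<bullet> support_vector v P" if "\<tau> \<in> \<Delta>" "u \<in> \<tau>" "P \<in> D" for \<tau> u P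
  proof -
    have "support_fn P u = (\<Sum>s\<in>SS \<tau>. (gg \<tau> s u * GG \<tau> s) * support_fn P (v (JJ \<tau> s)))"
      using F.sf_formula[of P \<tau> "SS \<tau>" "gg \<tau>" "JJ \<tau>" "GG \<tau>" u] that cd by (simp add: D_def)
    also have "\<dots> = Lv \<tau> u \<bullet> support_vector v P"
      by (simp add: Lv_def inner_sum_left inner_axis' sv_nth)
    finally show ?thesis .
  qed
  have Lv_nth: "Lv \<tau> u $ j = (\<Sum>s\<in>SS \<tau>. (gg \<tau> s u * GG \<tau> s) * axis (JJ \<tau> s) (1::real) $ j)" for \<tau> u j
    by (simp add: Lv_def)
  define PI where "PI = (PiE (UNIV::'m set) (\<lambda>_. \<Delta>))"
  define R where "R c = {U::real^'d^'m. \<forall>i. U $ i \<in> c i}" for c :: "'m \<Rightarrow> (real^'d) set"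
  define Av where "Av c U i = Lv (c i) (U $ i)" for c :: "'m \<Rightarrow> (real^'d) set" and U :: "real^'d^'m" and i
  define Mt where "Mt c U = (\<chi> j l. (\<Sum>i\<in>UNIV. Av c U i $ j * Av c U i $ l) + (\<Sum>b\<in>B0. b $ j * b $ l))"
    for c :: "'m \<Rightarrow> (real^'d) set" and U :: "real^'d^'m"
  have ciD: "c i \<in> \<Delta>" if "c \<in> PI" for c i using that by (simp add: PI_def PiE_iff)
  have key: "(\<forall>y. card (lse \<Delta> v U y) = 1) \<longleftrightarrow> det (Mt c U) \<noteq> 0" if c: "c \<in> PI" and U: "U \<in> R c" for c U
  proof -
    have Ui: "U $ i \<in> c i" for i using U by (simp add: R_def)
    have lse_eq: "lse \<Delta> v U y = {support_vector v P | P. P \<in> D \<and> (\<forall>Q\<in>D. ls_loss U y P \<le> ls_loss U y Q)}" for y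
      by (simp add: lse_def D_def)
    have L: "ls_loss U y P = (1 / real CARD('m)) * (\<Sum>i\<in>UNIV. (Av c U i \<bullet> support_vector v P - y$i)^2)"
      if "P \<in> D" for y P
      unfolding ls_loss_def Av_def using Lv_sf[OF ciD[OF c] Ui that] by simp
    have "(\<forall>y. card (lse \<Delta> v U y) = 1) \<longleftrightarrow> (\<forall>z\<in>span H. (\<forall>i. Av c U i \<bullet> z = 0) \<longrightarrow> z = 0)"
      unfolding lse_eq H_def
      by (rule abstractA[where D=D and hv="support_vector v" and a="Av c U" and L="\<lambda>y P. ls_loss U y P"
            and c="1 / real CARD('m)"]) (use L Hcv Hcl H0 H_def in auto)
    also have "\<dots> \<longleftrightarrow> (\<forall>z. (\<forall>i. Av c U i \<bullet> z = 0) \<and> (\<forall>b\<in>B0. b \<bullet> z = 0) \<longrightarrow> z = 0)"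
      using B0(2) by auto
    also have "\<dots> \<longleftrightarrow> det (Mt c U) \<noteq> 0"
      unfolding Mt_def using det_char[OF B0(1), of "Av c U"] by simp
    finally show ?thesis .
  qed
  have cover: "\<exists>c\<in>PI. U \<in> R c" for U :: "real^'d^'m"
  proof -
    define c where "c i = (SOME \<tau>. \<tau> \<in> \<Delta> \<and> U $ i \<in> \<tau>)" for i
    have ci: "c i \<in> \<Delta> \<and> U $ i \<in> c i" for i
    proof -
      have "\<exists>\<tau>. \<tau> \<in> \<Delta> \<and> U $ i \<in> \<tau>" using F.complete[of "U $ i"] by blast
      then show ?thesis unfolding c_def by (rule someI_ex)
    qed
    have "c \<in> PI" unfolding PI_def PiE_iff using ci by (simp add: extensional_def)
    moreover have "U \<in> R c" unfolding R_def using ci by simp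
    ultimately show ?thesis by blast
  qed
  have seteq: "{U :: real^'d^'m. \<forall>y. card (lse \<Delta> v U y) = 1} = (\<Union>c\<in>PI. R c \<inter> {U. det (Mt c U) \<noteq> 0})"
  proof (intro equalityI subsetI)
    fix U :: "real^'d^'m" assume U: "U \<in> {U :: real^'d^'m. \<forall>y. card (lse \<Delta> v U y) = 1}"
    obtain c where c: "c \<in> PI" "U \<in> R c" using cover[of U] by blast
    then have "det (Mt c U) \<noteq> 0" using key[OF c] U by simp
    then show "U \<in> (\<Union>c\<in>PI. R c \<inter> {U. det (Mt c U) \<noteq> 0})" using c by blast
  next
    fix U :: "real^'d^'m" assume "U \<in> (\<Union>c\<in>PI. R c \<inter> {U. det (Mt c U) \<noteq> 0})"
    then obtain c where c: "c \<in> PI" "U \<in> R c" "det (Mt c U) \<noteq> 0" by blast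
    then show "U \<in> {U :: real^'d^'m. \<forall>y. card (lse \<Delta> v U y) = 1}" using key[OF c(1,2)] by simp
  qed
  have finPI: "finite PI" unfolding PI_def using F.Delta_finite by (intro finite_PiE) auto
  have semR: "semialgebraic (R c)" if c: "c \<in> PI" for c
  proof -
    have memi: "{U::real^'d^'m. U $ i \<in> c i} =
        (\<Inter>b\<in>Basis. {U. (U $ i - (\<Sum>s\<in>SS (c i). gg (c i) s (U $ i) *\<^sub>R s)) \<bullet> b = 0}) \<inter>
        (\<Inter>s\<in>SS (c i). {U. gg (c i) s (U $ i) \<ge> 0})" for i
    proof -
      have cdi: "cdata v (c i) (SS (c i)) (gg (c i)) (JJ (c i)) (GG (c i))" using cd ciD[OF c] by blast
      have e1: "(x = y) \<longleftrightarrow> (\<forall>b\<in>Basis. (x - y) \<bullet> b = 0)" for x y :: "real^'d"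
        by (simp add: euclidean_all_zero_iff)
      have mem: "U $ i \<in> c i \<longleftrightarrow> ((\<forall>b\<in>Basis. (U $ i - (\<Sum>s\<in>SS (c i). gg (c i) s (U $ i) *\<^sub>R s)) \<bullet> b = 0)
                  \<and> (\<forall>s\<in>SS (c i). gg (c i) s (U $ i) \<ge> 0))" for U :: "real^'d^'m"
        using cdata_mem[OF cdi, of "U $ i"] e1[of "U $ i" "\<Sum>s\<in>SS (c i). gg (c i) s (U $ i) *\<^sub>R s"]
        by (simp only:)
      show ?thesis by (intro equalityI subsetI) (simp_all only: mem mem_Collect_eq Int_iff INT_iff)
    qed
    have "R c = (\<Inter>i\<in>UNIV. {U::real^'d^'m. U $ i \<in> c i})" by (auto simp: R_def)
    moreover have "semialgebraic {U::real^'d^'m. U $ i \<in> c i}" for i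
    proof -
      have fS: "finite (SS (c i))" and lin: "\<forall>s\<in>SS (c i). linear (gg (c i) s)" using cdS ciD[OF c] by auto
      have p1: "polyfun (\<lambda>U::real^'d^'m. (U $ i - (\<Sum>s\<in>SS (c i). gg (c i) s (U $ i) *\<^sub>R s)) \<bullet> b)" for b :: "real^'d"
      proof -
        have eq: "(\<lambda>U::real^'d^'m. (U $ i - (\<Sum>s\<in>SS (c i). gg (c i) s (U $ i) *\<^sub>R s)) \<bullet> b) =
                  (\<lambda>U. (U $ i) \<bullet> b + (- 1) * (\<Sum>s\<in>SS (c i). gg (c i) s (U $ i) * (s \<bullet> b)))"
          by (simp add: inner_diff_left inner_sum_left)
        have "polyfun (\<lambda>U::real^'d^'m. (U $ i) \<bullet> b)"
          by (rule polyfun_nth_comp) (rule bounded_linear.linear[OF bounded_linear_inner_left])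
        moreover have "polyfun (\<lambda>U::real^'d^'m. (\<Sum>s\<in>SS (c i). gg (c i) s (U $ i) * (s \<bullet> b)))"
          using fS lin by (intro polyfun_sum polyfun.mult polyfun.const polyfun_nth_comp) auto
        ultimately show ?thesis unfolding eq by (intro polyfun.add polyfun_cmult)
      qed
      have p2: "polyfun (\<lambda>U::real^'d^'m. gg (c i) s (U $ i))" if "s \<in> SS (c i)" for s
        using lin that by (intro polyfun_nth_comp) auto
      show ?thesis unfolding memi
        using fS p1 p2 by (intro semialg_Int semialg_INT semialg_eq semialg_ge) auto
    qed
    ultimately show ?thesis by (simp add: semialg_INT)
  qed
  have semD: "semialgebraic {U::real^'d^'m. det (Mt c U) \<noteq> 0}" if c: "c \<in> PI" for c
  proof -
    have pA: "polyfun (\<lambda>U::real^'d^'m. Av c U i $ j)" for i j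
    proof -
      have fS: "finite (SS (c i))" and lin: "\<forall>s\<in>SS (c i). linear (gg (c i) s)" using cdS ciD[OF c] by auto
      show ?thesis unfolding Av_def Lv_nth
        using fS lin by (intro polyfun_sum polyfun.mult polyfun.const polyfun_nth_comp) auto
    qed
    have "polyfun (\<lambda>U. Mt c U $ j $ l)" for j l
      unfolding Mt_def by (simp, intro polyfun.add polyfun_sum polyfun.mult pA polyfun.const) auto
    then show ?thesis by (intro semialg_neq polyfun_det)
  qed
  show ?thesis unfolding seteq
    using finPI semR semD by (intro semialg_UN semialg_Int) auto
qed


end
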